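(* Consider a two-player bilinear game with $f_1(x_1,x_2)=x_1^\top Ax_2$, $f_2(x_1,x_2)=x_1^\top B^\top x_2$, $A\in\mathbb{R}^{n_1\times n_2}$, $B\in\mathbb{R}^{n_2\times n_1}$, step sizes $\gamma_1,\gamma_2>0$, and let $W$ be either $W_s$ (simultaneous gradient play) or $W_a$ (alternating gradient play) as defined in the context. Write $a_{pq}$, $b_{pq}$ for the $(p,q)$ entries of $A$, $B$. (1) If $i\neq j$ and coordinate $x_{1,j}$ is disturbance decoupled from coordinate $x_{1,i}$, then $\sum_{\ell=1}^{n_2}b_{\ell i}a_{j\ell}=0$. (2) If $i\neq j$ and coordinate $x_{2,j}$ is disturbance decoupled from coordinate $x_{2,i}$, then $\sum_{\ell=1}^{n_1}b_{j\ell}a_{\ell i}=0$.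
   Context: Player 1 has action $x_1=(x_{1,1},\ldots,x_{1,n_1})\in\mathbb{R}^{n_1}$, player 2 has $x_2=(x_{2,1},\ldots,x_{2,n_2})\in\mathbb{R}^{n_2}$; the joint vector $x=(x_1,x_2)\in\mathbb{R}^{n_1+n_2}$. Simultaneous gradient play $x_1^{k+1}=x_1^k-\gamma_1Ax_2^k$, $x_2^{k+1}=x_2^k-\gamma_2Bx_1^k$ is the linear iteration $x^{k+1}=W_sx^k$ with $W_s=\begin{bmatrix}I&-\gamma_1A\\-\gamma_2B&I\end{bmatrix}$. Alternating gradient play $x_1^{k+1}=x_1^k-\gamma_1Ax_2^k$, $x_2^{k+1}=x_2^k-\gamma_2Bx_1^{k+1}$ is the linear iteration $x^{k+1}=W_ax^k$ with $W_a=\begin{bmatrix}I&-\gamma_1A\\-\gamma_2B&I+\gamma_1\gamma_2BA\end{bmatrix}$. Each coordinate is treated as a separate scalar player whose game-graph matrix is $W$. For coordinates $p\neq q$ of $\mathbb{R}^{n_1+n_2}$, with $\gamma_{(q)}$ the step size of the player owning coordinate $q$, coordinate $p$ is disturbance decoupled from coordinate $q$ if for every initial $x^0$ and every real sequence $(\delta^k)_{k\ge0}$, the iterations $x^{k+1}=Wx^k$ and $y^{k+1}=Wy^k-\gamma_{(q)}\delta^ke_q$ with $y^0=x^0$ satisfy $y^k_p=x^k_p$ for all $k\ge0$ ($e_q$ the $q$-th standard basis vector). *)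

theory Defs
  imports "HOL-Analysis.Analysis"
begin

text \<open>Joint coordinates are indexed by the sum type 'n1 + 'n2: Inl i is x_{1,i}, Inr l is x_{2,l}.
  A :: real^'n2^'n1 (A $ i $ l = a_{il}), B :: real^'n1^'n2 (B $ l $ i = b_{li}).\<close>

definition W_sim :: "real \<Rightarrow> real \<Rightarrow> real^'n2^'n1 \<Rightarrow> real^'n1^'n2 \<Rightarrow> real^('n1 + 'n2)^('n1 + 'n2)" where
  "W_sim g1 g2 A B = (\<chi> r c. (case (r, c) of
      (Inl i, Inl j) \<Rightarrow> (if i = j then 1 else 0)
    | (Inl i, Inr l) \<Rightarrow> - g1 * A $ i $ l
    | (Inr l, Inl i) \<Rightarrow> - g2 * B $ l $ i
    | (Inr l, Inr m) \<Rightarrow> (if l = m then 1 else 0)))"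

definition W_alt :: "real \<Rightarrow> real \<Rightarrow> real^'n2^'n1 \<Rightarrow> real^'n1^'n2 \<Rightarrow> real^('n1 + 'n2)^('n1 + 'n2)" where
  "W_alt g1 g2 A B = (\<chi> r c. (case (r, c) of
      (Inl i, Inl j) \<Rightarrow> (if i = j then 1 else 0)
    | (Inl i, Inr l) \<Rightarrow> - g1 * A $ i $ l
    | (Inr l, Inl i) \<Rightarrow> - g2 * B $ l $ i
    | (Inr l, Inr m) \<Rightarrow> (if l = m then 1 else 0) + g1 * g2 * (\<Sum>i\<in>UNIV. B $ l $ i * A $ i $ m)))"

definition step_of :: "real \<Rightarrow> real \<Rightarrow> ('n1 + 'n2) \<Rightarrow> real" where
  "step_of g1 g2 q = (case q of Inl _ \<Rightarrow> g1 | Inr _ \<Rightarrow> g2)"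

fun traj :: "real^'m^'m \<Rightarrow> real^'m \<Rightarrow> nat \<Rightarrow> real^'m" where
  "traj W x0 0 = x0"
| "traj W x0 (Suc k) = W *v traj W x0 k"

fun dtraj :: "real^'m^'m \<Rightarrow> real \<Rightarrow> 'm \<Rightarrow> (nat \<Rightarrow> real) \<Rightarrow> real^'m \<Rightarrow> nat \<Rightarrow> real^'m" where
  "dtraj W g q d x0 0 = x0"
| "dtraj W g q d x0 (Suc k) = W *v dtraj W g q d x0 k - (g * d k) *\<^sub>R axis q 1"

text \<open>Coordinate p is disturbance decoupled from coordinate q (p \<noteq> q), with gamma the
  step size of the owner of q.\<close>
definition dist_decoupled :: "real^'m^'m \<Rightarrow> real \<Rightarrow> 'm \<Rightarrow> 'm \<Rightarrow> bool" where
  "dist_decoupled W g p q \<longleftrightarrow> p \<noteq> q \<and>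
     (\<forall>x0 d k. dtraj W g q d x0 k $ p = traj W x0 k $ p)"

end

theory Submission
  imports Defs
begin

lemma sum_UNIV_plus:
  "(\<Sum>x\<in>(UNIV::('a::finite + 'b::finite) set). f x) = (\<Sum>a\<in>UNIV. f (Inl a)) + (\<Sum>b\<in>UNIV. f (Inr b))"
proof -
  have "(\<Sum>x\<in>(UNIV::('a + 'b) set). f x) = (\<Sum>x\<in>(UNIV::'a set) <+> (UNIV::'b set). f x)"
    by (simp add: UNIV_Plus_UNIV)
  also have "\<dots> = (\<Sum>a\<in>UNIV. f (Inl a)) + (\<Sum>b\<in>UNIV. f (Inr b))"
    by (subst sum.Plus) (auto simp: comp_def)
  finally show ?thesis .
qed

lemma mv_axis: "(M *v axis q 1) $ p = (M $ p $ q :: real)"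
  by (simp add: matrix_vector_mult_def axis_def if_distrib cong: if_cong)

lemma mv_neg: "(M::real^'n^'m) *v (- x) = - (M *v x)"
  by (metis matrix_vector_mult_scaleR scaleR_minus1_left)

lemma sum_delta2: "i \<noteq> j \<Longrightarrow> (\<Sum>a\<in>UNIV. (if a = i then 1 else 0) * (if j = a then 1 else 0)) = (0::real)"
  by (intro sum.neutral) auto

lemma traj0: "traj W 0 k = 0"
  by (induction k) auto

lemma key:
  fixes W :: "real^'m^'m"
  assumes "dist_decoupled W g p q" "g \<noteq> 0"
  shows "W $ p $ q = 0 \<and> (\<Sum>r\<in>UNIV. W $ p $ r * W $ r $ q) = 0"
proof -
  define d where "d = (\<lambda>k::nat. if k = 0 then (1::real) else 0)"
  have h: "\<And>k. dtraj W g q d 0 k $ p = 0"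
    using assms(1) traj0[of W] unfolding dist_decoupled_def by (metis zero_index)
  have e2: "dtraj W g q d 0 2 = - g *\<^sub>R (W *v axis q 1)"
    by (simp add: d_def numeral_2_eq_2 matrix_vector_mult_scaleR mv_neg)
  have e3: "dtraj W g q d 0 3 = - g *\<^sub>R (W *v (W *v axis q 1))"
    by (simp add: d_def numeral_3_eq_3 matrix_vector_mult_scaleR mv_neg)
  have "(W *v axis q 1) $ p = 0" using h[of 2] e2 assms(2) by simp
  moreover have "(W *v (W *v axis q 1)) $ p = 0" using h[of 3] e3 assms(2) by simp
  moreover have "\<And>v. (W *v v) $ p = (\<Sum>r\<in>UNIV. W $ p $ r * v $ r)"
    by (simp add: matrix_vector_mult_def)
  ultimately show ?thesis
    by (simp add: mv_axis)
qed

theorem corollary3: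
  fixes A :: "real^'n2^'n1" and B :: "real^'n1^'n2" and g1 g2 :: real
    and W :: "real^('n1 + 'n2)^('n1 + 'n2)"
  assumes "g1 > 0" and "g2 > 0"
    and "W = W_sim g1 g2 A B \<or> W = W_alt g1 g2 A B"
  shows "(\<forall>i j. i \<noteq> j \<longrightarrow> dist_decoupled W (step_of g1 g2 (Inl i)) (Inl j) (Inl i)
              \<longrightarrow> (\<Sum>l\<in>UNIV. B $ l $ i * A $ j $ l) = 0)
       \<and> (\<forall>i j. i \<noteq> j \<longrightarrow> dist_decoupled W (step_of g1 g2 (Inr i)) (Inr j) (Inr i)
              \<longrightarrow> (\<Sum>l\<in>UNIV. B $ j $ l * A $ l $ i) = 0)"
proof (intro conjI allI impI)
  fix i j :: 'n1
  assume ij: "i \<noteq> j" and dd: "dist_decoupled W (step_of g1 g2 (Inl i)) (Inl j) (Inl i)"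
  from key[OF dd] have k: "(\<Sum>r\<in>UNIV. W $ Inl j $ r * W $ r $ Inl i) = 0"
    using assms by (simp add: step_of_def)
  have "(\<Sum>r\<in>UNIV. W $ Inl j $ r * W $ r $ Inl i) = g1 * g2 * (\<Sum>l\<in>UNIV. B $ l $ i * A $ j $ l)"
    using assms(3) ij
    by (elim disjE) (simp_all add: sum_UNIV_plus W_sim_def W_alt_def sum_distrib_left mult_ac sum_delta2)
  with k assms(1,2) show "(\<Sum>l\<in>UNIV. B $ l $ i * A $ j $ l) = 0" by simp
next
  fix i j :: 'n2
  assume ij: "i \<noteq> j" and dd: "dist_decoupled W (step_of g1 g2 (Inr i)) (Inr j) (Inr i)"
  from key[OF dd] have k1: "W $ Inr j $ Inr i = 0"
    and k: "(\<Sum>r\<in>UNIV. W $ Inr j $ r * W $ r $ Inr i) = 0"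
    using assms by (simp_all add: step_of_def)
  from assms(3) show "(\<Sum>l\<in>UNIV. B $ j $ l * A $ l $ i) = 0"
  proof
    assume W: "W = W_sim g1 g2 A B"
    have "(\<Sum>r\<in>UNIV. W $ Inr j $ r * W $ r $ Inr i) = g1 * g2 * (\<Sum>l\<in>UNIV. B $ j $ l * A $ l $ i)"
      using W ij by (simp add: sum_UNIV_plus W_sim_def sum_distrib_left mult_ac sum_delta2)
    with k assms(1,2) show ?thesis by simp
  next
    assume W: "W = W_alt g1 g2 A B"
    have "W $ Inr j $ Inr i = g1 * g2 * (\<Sum>l\<in>UNIV. B $ j $ l * A $ l $ i)"
      using W ij by (simp add: W_alt_def)
    with k1 assms(1,2) show ?thesis by simp
  qed
qed

end
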